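(* Let $N \in \mathbb{N}$, $\beta>0$ and $h\in\mathbb{R}$. Let $(g_{ij})_{1\le i<j\le N}$ be independent centered Gaussian random variables with variance $1/N$, extended to a symmetric matrix by $g_{ji}=g_{ij}$ and $g_{ii}=0$. Define the quenched finite-volume free energy \[ N f_N(\beta,h) = \log E_o\left[\exp\left(\beta H_N(\sigma) + h\sum_{i=1}^N \sigma_i\right)\right], \qquad H_N(\sigma)=\sum_{1\le i<j\le N} g_{ij}\sigma_i\sigma_j = \frac12\sum_{i,j=1}^N g_{ij}\sigma_i\sigma_j, \] where $E_o$ denotes expectation with respect to the uniform probability measure $P_o(\sigma)=2^{-N}$ on $\Sigma_N=\{-1,+1\}^N$. For each fixed realization of the matrix $(g_{ij})$, let $\mathsf{X}=(\mathsf{X}_i)_{i=1}^N$ be a centered Gaussian random vector (independent of everything else, with expectation denoted $\mathsf{E}$) with covariance \[ \mathsf{E}\,\mathsf{X}_i\mathsf{X}_j = \begin{cases} \sum_{k=1}^N |g_{ik}|, & i=j,\\ g_{ij}, & i\neq j.\end{cases} \] Then \[ N f_N(\beta,h) = \log \mathsf{E}\exp\left(\sum_{i=1}^N \log\cosh\left(h+\sqrt{\beta}\,\mathsf{X}_i\right)\right) - \frac{\beta}{2}\sum_{i,j=1}^N |g_{ij}|. \]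
   Context: This is the Sherrington–Kirkpatrick spin glass model. The disorder $(g_{ij})$ is quenched: the identity is asserted for each fixed realization of the matrix $(g_{ij})$, with $\mathsf{E}$ the expectation only over the auxiliary Gaussian field $\mathsf{X}$ (whose covariance depends on the realization of $(g_{ij})$). *)

theory Defs
  imports "HOL-Probability.Probability"
begin

definition spin_configs :: "nat \<Rightarrow> (nat \<Rightarrow> real) set" where
  "spin_configs N = ({..<N} \<rightarrow>\<^sub>E {-1, 1})"

definition SK_H :: "nat \<Rightarrow> (nat \<Rightarrow> nat \<Rightarrow> real) \<Rightarrow> (nat \<Rightarrow> real) \<Rightarrow> real" where
  "SK_H N g \<sigma> = (\<Sum>i<N. \<Sum>j\<in>{i<..<N}. g i j * \<sigma> i * \<sigma> j)"

definition N_free_energy :: "nat \<Rightarrow> (nat \<Rightarrow> nat \<Rightarrow> real) \<Rightarrow> real \<Rightarrow> real \<Rightarrow> real" where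
  "N_free_energy N g \<beta> h =
     ln ((\<Sum>\<sigma>\<in>spin_configs N. exp (\<beta> * SK_H N g \<sigma> + h * (\<Sum>i<N. \<sigma> i))) / 2 ^ N)"

definition aux_cov :: "nat \<Rightarrow> (nat \<Rightarrow> nat \<Rightarrow> real) \<Rightarrow> nat \<Rightarrow> nat \<Rightarrow> real" where
  "aux_cov N g i j = (if i = j then (\<Sum>k<N. \<bar>g i k\<bar>) else g i j)"

definition centered_gaussian_vector ::
  "'a measure \<Rightarrow> nat \<Rightarrow> (nat \<Rightarrow> 'a \<Rightarrow> real) \<Rightarrow> (nat \<Rightarrow> nat \<Rightarrow> real) \<Rightarrow> bool" where
  "centered_gaussian_vector M N X C \<longleftrightarrow>
     (\<forall>i<N. X i \<in> borel_measurable M) \<and>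
     (\<forall>a :: nat \<Rightarrow> real.
        (let v = (\<Sum>i<N. \<Sum>j<N. a i * a j * C i j) in
         if v = 0 then (AE \<omega> in M. (\<Sum>i<N. a i * X i \<omega>) = 0)
         else distributed M lborel (\<lambda>\<omega>. \<Sum>i<N. a i * X i \<omega>) (normal_density 0 (sqrt v))))"

end

theory Submission
  imports Defs
begin

lemma normal_mgf_aux:
  fixes s t :: real assumes "s \<noteq> 0"
  shows "normal_density 0 s x * exp (t * x) = exp (t^2 * s^2 / 2) * normal_density (t * s^2) s x"
proof -
  have "-(x - 0)\<^sup>2 / (2 * s\<^sup>2) + t * x = t^2 * s^2 / 2 + (-(x - t * s^2)\<^sup>2 / (2 * s\<^sup>2))"
    using assms by (simp add: field_simps power2_eq_square)
  then show ?thesis unfolding normal_density_def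
    by (simp add: exp_add[symmetric]) 
qed

lemma (in prob_space) normal_mgf:
  fixes s t :: real
  assumes D: "distributed M lborel Y (normal_density 0 s)" and s0: "s > 0"
  shows "integrable M (\<lambda>\<omega>. exp (t * Y \<omega>))"
    and "expectation (\<lambda>\<omega>. exp (t * Y \<omega>)) = exp (t^2 * s^2 / 2)"
proof -
  have s: "s \<noteq> 0" using s0 by simp
  have eq: "(\<lambda>x. normal_density 0 s x * exp (t * x)) = (\<lambda>x. exp (t^2 * s^2 / 2) * normal_density (t * s^2) s x)"
    using normal_mgf_aux[OF s] by auto
  have "integrable lborel (\<lambda>x. normal_density 0 s x * exp (t * x))"
    unfolding eq by (rule integrable_mult_right) (rule integrable_normal_density, rule s0)
  then show "integrable M (\<lambda>\<omega>. exp (t * Y \<omega>))"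
    using distributed_integrable[OF D, of "\<lambda>x. exp (t * x)"] by simp
  have "expectation (\<lambda>\<omega>. exp (t * Y \<omega>)) = (\<integral>x. normal_density 0 s x * exp (t * x) \<partial>lborel)"
    using distributed_integral[OF D, of "\<lambda>x. exp (t * x)"] by simp
  also have "\<dots> = exp (t^2 * s^2 / 2)" unfolding eq using integral_normal_density[OF s0] by simp
  finally show "expectation (\<lambda>\<omega>. exp (t * Y \<omega>)) = exp (t^2 * s^2 / 2)" .
qed

lemma sum_sym_half:
  fixes f :: "nat \<Rightarrow> nat \<Rightarrow> real"
  assumes "\<And>i j. f i j = f j i" "\<And>i. f i i = 0"
  shows "(\<Sum>i<N. \<Sum>j<N. f i j) = 2 * (\<Sum>i<N. \<Sum>j\<in>{i<..<N}. f i j)"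
proof (induction N)
  case 0 then show ?case by simp
next
  case (Suc N)
  have a: "{i<..<Suc N} = insert N {i<..<N}" if "i < N" for i using that by auto
  have "(\<Sum>i<Suc N. \<Sum>j\<in>{i<..<Suc N}. f i j) = (\<Sum>i<N. \<Sum>j\<in>{i<..<Suc N}. f i j)"
  proof -
    have "{N<..<Suc N} = {}" by auto
    then show ?thesis by simp
  qed
  also have "\<dots> = (\<Sum>i<N. f i N + (\<Sum>j\<in>{i<..<N}. f i j))"
    by (intro sum.cong refl) (simp add: a)
  finally have r: "(\<Sum>i<Suc N. \<Sum>j\<in>{i<..<Suc N}. f i j) = (\<Sum>i<N. f i N) + (\<Sum>i<N. \<Sum>j\<in>{i<..<N}. f i j)"
    by (simp add: sum.distrib)
  have l: "(\<Sum>i<Suc N. \<Sum>j<Suc N. f i j) = (\<Sum>i<N. \<Sum>j<N. f i j) + (\<Sum>i<N. f i N) + (\<Sum>j<N. f N j) + f N N"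
    by (simp add: sum.distrib)
  have "(\<Sum>j<N. f N j) = (\<Sum>i<N. f i N)" using assms(1) by metis
  then show ?case using l r Suc assms(2) by simp
qed

lemma cosh_prod:
  fixes a :: "nat \<Rightarrow> real"
  shows "(\<Prod>i<N. cosh (a i)) = (\<Sum>\<sigma>\<in>spin_configs N. exp (\<Sum>i<N. \<sigma> i * a i)) / 2 ^ N"
proof -
  have c: "cosh x = (\<Sum>y\<in>{-1,1::real}. exp (y * x) / 2)" for x :: real
    by (simp add: cosh_def add_divide_distrib)
  have "(\<Prod>i<N. cosh (a i)) = (\<Prod>i<N. \<Sum>y\<in>{-1,1::real}. exp (y * a i) / 2)"
    by (simp only: c)
  also have "\<dots> = (\<Sum>\<sigma>\<in>spin_configs N. \<Prod>i<N. exp (\<sigma> i * a i) / 2)"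
    unfolding spin_configs_def by (rule prod_sum_PiE) auto
  also have "\<dots> = (\<Sum>\<sigma>\<in>spin_configs N. exp (\<Sum>i<N. \<sigma> i * a i) / 2 ^ N)"
    by (intro sum.cong refl) (simp add: prod_dividef exp_sum)
  also have "\<dots> = (\<Sum>\<sigma>\<in>spin_configs N. exp (\<Sum>i<N. \<sigma> i * a i)) / 2 ^ N"
    by (simp add: sum_divide_distrib)
  finally show ?thesis .
qed

lemma spin_sq:
  assumes "\<sigma> \<in> spin_configs N" "i < N"
  shows "\<sigma> i = -1 \<or> \<sigma> i = 1"
  using assms unfolding spin_configs_def by auto

lemma var_formula:
  fixes g :: "nat \<Rightarrow> nat \<Rightarrow> real"
  assumes sym: "\<And>i j. g i j = g j i" and diag: "\<And>i. g i i = 0"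
    and \<sigma>: "\<sigma> \<in> spin_configs N"
  shows "(\<Sum>i<N. \<Sum>j<N. \<sigma> i * \<sigma> j * aux_cov N g i j)
          = (\<Sum>i<N. \<Sum>j<N. \<bar>g i j\<bar>) + 2 * SK_H N g \<sigma>"
    and "(\<Sum>i<N. \<Sum>j<N. \<sigma> i * \<sigma> j * aux_cov N g i j) \<ge> 0"
proof -
  have t: "\<sigma> i * \<sigma> j * aux_cov N g i j = (if i = j then (\<Sum>k<N. \<bar>g i k\<bar>) else 0) + g i j * \<sigma> i * \<sigma> j"
    if "i < N" "j < N" for i j
  proof (cases "i = j")
    case True
    then show ?thesis using spin_sq[OF \<sigma> that(1)] diag by (auto simp: aux_cov_def)
  qed (simp add: aux_cov_def)
  have "(\<Sum>i<N. \<Sum>j<N. \<sigma> i * \<sigma> j * aux_cov N g i j)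
      = (\<Sum>i<N. \<Sum>j<N. (if i = j then (\<Sum>k<N. \<bar>g i k\<bar>) else 0) + g i j * \<sigma> i * \<sigma> j)"
    by (intro sum.cong refl) (simp add: t)
  also have "\<dots> = (\<Sum>i<N. \<Sum>j<N. \<bar>g i j\<bar>) + (\<Sum>i<N. \<Sum>j<N. g i j * \<sigma> i * \<sigma> j)"
    by (simp add: sum.distrib)
  finally have e: "(\<Sum>i<N. \<Sum>j<N. \<sigma> i * \<sigma> j * aux_cov N g i j)
      = (\<Sum>i<N. \<Sum>j<N. \<bar>g i j\<bar>) + (\<Sum>i<N. \<Sum>j<N. g i j * \<sigma> i * \<sigma> j)" .
  have "(\<Sum>i<N. \<Sum>j<N. g i j * \<sigma> i * \<sigma> j) = 2 * SK_H N g \<sigma>"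
    unfolding SK_H_def
    by (rule sum_sym_half) (auto simp: diag intro: sym[THEN subst])
  then show "(\<Sum>i<N. \<Sum>j<N. \<sigma> i * \<sigma> j * aux_cov N g i j)
          = (\<Sum>i<N. \<Sum>j<N. \<bar>g i j\<bar>) + 2 * SK_H N g \<sigma>" using e by simp
  have "(\<Sum>i<N. \<Sum>j<N. \<bar>g i j\<bar>) + (\<Sum>i<N. \<Sum>j<N. g i j * \<sigma> i * \<sigma> j)
     = (\<Sum>i<N. \<Sum>j<N. \<bar>g i j\<bar> + g i j * \<sigma> i * \<sigma> j)" by (simp add: sum.distrib)
  also have "\<dots> \<ge> 0"
  proof (intro sum_nonneg)
    fix i j assume "i \<in> {..<N}" "j \<in> {..<N}"
    then show "0 \<le> \<bar>g i j\<bar> + g i j * \<sigma> i * \<sigma> j"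
      using spin_sq[OF \<sigma>, of i] spin_sq[OF \<sigma>, of j] by auto
  qed
  finally show "(\<Sum>i<N. \<Sum>j<N. \<sigma> i * \<sigma> j * aux_cov N g i j) \<ge> 0" using e by simp
qed


lemma gauss_mgf_comb:
  fixes C :: "nat \<Rightarrow> nat \<Rightarrow> real" and a :: "nat \<Rightarrow> real"
  assumes P: "prob_space M" and G: "centered_gaussian_vector M N X C"
    and v0: "(\<Sum>i<N. \<Sum>j<N. a i * a j * C i j) \<ge> 0"
  shows "integrable M (\<lambda>\<omega>. exp (t * (\<Sum>i<N. a i * X i \<omega>)))"
    and "prob_space.expectation M (\<lambda>\<omega>. exp (t * (\<Sum>i<N. a i * X i \<omega>)))
           = exp (t^2 * (\<Sum>i<N. \<Sum>j<N. a i * a j * C i j) / 2)"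
proof -
  interpret prob_space M by (rule P)
  define v where "v = (\<Sum>i<N. \<Sum>j<N. a i * a j * C i j)"
  have meas: "X i \<in> borel_measurable M" if "i < N" for i
    using G that unfolding centered_gaussian_vector_def by auto
  have Gv: "if v = 0 then (AE \<omega> in M. (\<Sum>i<N. a i * X i \<omega>) = 0)
         else distributed M lborel (\<lambda>\<omega>. \<Sum>i<N. a i * X i \<omega>) (normal_density 0 (sqrt v))"
    using G unfolding centered_gaussian_vector_def v_def Let_def by blast
  have mZ: "(\<lambda>\<omega>. exp (t * (\<Sum>i<N. a i * X i \<omega>))) \<in> borel_measurable M"
    using meas by measurable
  have "integrable M (\<lambda>\<omega>. exp (t * (\<Sum>i<N. a i * X i \<omega>))) \<and>
        expectation (\<lambda>\<omega>. exp (t * (\<Sum>i<N. a i * X i \<omega>))) = exp (t^2 * v / 2)"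
  proof (cases "v = 0")
    case True
    then have ae: "AE \<omega> in M. exp (t * (\<Sum>i<N. a i * X i \<omega>)) = 1"
      using Gv by (auto elim: AE_mp)
    have "integrable M (\<lambda>\<omega>. exp (t * (\<Sum>i<N. a i * X i \<omega>))) = integrable M (\<lambda>_. 1::real)"
      by (rule integrable_cong_AE) (use mZ ae in auto)
    moreover have "expectation (\<lambda>\<omega>. exp (t * (\<Sum>i<N. a i * X i \<omega>))) = expectation (\<lambda>_. 1::real)"
      by (rule integral_cong_AE) (use mZ ae in auto)
    ultimately show ?thesis using True prob_space by simp
  next
    case False
    then have D: "distributed M lborel (\<lambda>\<omega>. \<Sum>i<N. a i * X i \<omega>) (normal_density 0 (sqrt v))"
      using Gv by simp
    have vp: "v > 0" using False v0 unfolding v_def by simp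
    then have sp: "sqrt v > 0" by simp
    show ?thesis using normal_mgf[OF D sp, of t] vp by simp
  qed
  then show "integrable M (\<lambda>\<omega>. exp (t * (\<Sum>i<N. a i * X i \<omega>)))"
    and "expectation (\<lambda>\<omega>. exp (t * (\<Sum>i<N. a i * X i \<omega>)))
           = exp (t^2 * (\<Sum>i<N. \<Sum>j<N. a i * a j * C i j) / 2)" unfolding v_def by auto
qed


theorem mainTheorem1:
  fixes N :: nat and \<beta> h :: real
    and g :: "nat \<Rightarrow> nat \<Rightarrow> real"
    and M :: "'a measure" and X :: "nat \<Rightarrow> 'a \<Rightarrow> real"
  assumes "\<beta> > 0"
    and "\<And>i j. g i j = g j i"
    and "\<And>i. g i i = 0"
    and "prob_space M"
    and "centered_gaussian_vector M N X (aux_cov N g)"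
  shows "N_free_energy N g \<beta> h =
           ln (prob_space.expectation M
                 (\<lambda>\<omega>. exp (\<Sum>i<N. ln (cosh (h + sqrt \<beta> * X i \<omega>)))))
           - \<beta> / 2 * (\<Sum>i<N. \<Sum>j<N. \<bar>g i j\<bar>)"
proof -
  interpret P: prob_space M by (rule assms(4))
  define S where "S = spin_configs N"
  define G where "G = (\<Sum>i<N. \<Sum>j<N. \<bar>g i j\<bar>)"
  define Z where "Z = (\<lambda>\<sigma> \<omega>. exp (sqrt \<beta> * (\<Sum>i<N. \<sigma> i * X i \<omega>)))"
  have finS: "finite S" unfolding S_def spin_configs_def by (auto intro: finite_PiE)
  have neS: "S \<noteq> {}" unfolding S_def spin_configs_def by (simp add: PiE_eq_empty_iff)
  have vf: "(\<Sum>i<N. \<Sum>j<N. \<sigma> i * \<sigma> j * aux_cov N g i j) = G + 2 * SK_H N g \<sigma>"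
     "(\<Sum>i<N. \<Sum>j<N. \<sigma> i * \<sigma> j * aux_cov N g i j) \<ge> 0" if "\<sigma> \<in> S" for \<sigma>
    using var_formula[where g=g and \<sigma>=\<sigma> and N=N] assms(2,3) that unfolding G_def S_def by auto
  have intZ: "integrable M (Z \<sigma>)" and EZ: "P.expectation (Z \<sigma>) = exp (\<beta> * (G + 2 * SK_H N g \<sigma>) / 2)"
    if "\<sigma> \<in> S" for \<sigma>
    using gauss_mgf_comb[OF assms(4,5) vf(2)[OF that], of "sqrt \<beta>"] vf(1)[OF that] assms(1)
    unfolding Z_def by auto
  have pw: "exp (\<Sum>i<N. ln (cosh (h + sqrt \<beta> * X i \<omega>)))
      = (\<Sum>\<sigma>\<in>S. exp (h * (\<Sum>i<N. \<sigma> i)) * Z \<sigma> \<omega>) / 2 ^ N" for \<omega>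
  proof -
    have "exp (\<Sum>i<N. ln (cosh (h + sqrt \<beta> * X i \<omega>))) = (\<Prod>i<N. cosh (h + sqrt \<beta> * X i \<omega>))"
      by (simp add: exp_sum)
    also have "\<dots> = (\<Sum>\<sigma>\<in>S. exp (\<Sum>i<N. \<sigma> i * (h + sqrt \<beta> * X i \<omega>))) / 2 ^ N"
      unfolding S_def by (rule cosh_prod)
    also have "\<dots> = (\<Sum>\<sigma>\<in>S. exp (h * (\<Sum>i<N. \<sigma> i)) * Z \<sigma> \<omega>) / 2 ^ N"
      unfolding Z_def
      by (intro arg_cong[where f="\<lambda>x. x / 2 ^ N"] sum.cong refl)
         (simp add: exp_add[symmetric] distrib_left sum.distrib sum_distrib_left sum_distrib_right mult_ac)
    finally show ?thesis .
  qed
  have "P.expectation (\<lambda>\<omega>. exp (\<Sum>i<N. ln (cosh (h + sqrt \<beta> * X i \<omega>))))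
      = P.expectation (\<lambda>\<omega>. (\<Sum>\<sigma>\<in>S. exp (h * (\<Sum>i<N. \<sigma> i)) * Z \<sigma> \<omega>) / 2 ^ N)"
    by (simp only: pw)
  also have "\<dots> = (\<Sum>\<sigma>\<in>S. exp (h * (\<Sum>i<N. \<sigma> i)) * P.expectation (Z \<sigma>)) / 2 ^ N"
  proof -
    have "P.expectation (\<lambda>\<omega>. \<Sum>\<sigma>\<in>S. exp (h * (\<Sum>i<N. \<sigma> i)) * Z \<sigma> \<omega>)
       = (\<Sum>\<sigma>\<in>S. P.expectation (\<lambda>\<omega>. exp (h * (\<Sum>i<N. \<sigma> i)) * Z \<sigma> \<omega>))"
      by (rule Bochner_Integration.integral_sum) (auto intro: intZ)
    then show ?thesis by (simp only: integral_divide_zero integral_mult_right_zero)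
  qed
  also have "\<dots> = (\<Sum>\<sigma>\<in>S. exp (\<beta> * SK_H N g \<sigma> + h * (\<Sum>i<N. \<sigma> i)) * exp (\<beta> / 2 * G)) / 2 ^ N"
    by (intro arg_cong[where f="\<lambda>x. x / 2 ^ N"] sum.cong refl)
       (simp add: EZ exp_add[symmetric] field_simps)
  also have "\<dots> = exp (\<beta> / 2 * G) * ((\<Sum>\<sigma>\<in>S. exp (\<beta> * SK_H N g \<sigma> + h * (\<Sum>i<N. \<sigma> i))) / 2 ^ N)"
    by (simp add: sum_distrib_left sum_distrib_right mult.commute)
  finally have E: "P.expectation (\<lambda>\<omega>. exp (\<Sum>i<N. ln (cosh (h + sqrt \<beta> * X i \<omega>))))
      = exp (\<beta> / 2 * G) * ((\<Sum>\<sigma>\<in>S. exp (\<beta> * SK_H N g \<sigma> + h * (\<Sum>i<N. \<sigma> i))) / 2 ^ N)" .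
  have pos: "(\<Sum>\<sigma>\<in>S. exp (\<beta> * SK_H N g \<sigma> + h * (\<Sum>i<N. \<sigma> i))) / 2 ^ N > 0"
    using finS neS by (intro divide_pos_pos sum_pos) auto
  have L: "ln (exp (\<beta> / 2 * G) * ((\<Sum>\<sigma>\<in>S. exp (\<beta> * SK_H N g \<sigma> + h * (\<Sum>i<N. \<sigma> i))) / 2 ^ N))
     = \<beta> / 2 * G + ln ((\<Sum>\<sigma>\<in>S. exp (\<beta> * SK_H N g \<sigma> + h * (\<Sum>i<N. \<sigma> i))) / 2 ^ N)"
  proof -
    have "(\<Sum>\<sigma>\<in>S. exp (\<beta> * SK_H N g \<sigma> + h * (\<Sum>i<N. \<sigma> i))) \<noteq> 0"
      using pos by (metis div_0 less_irrefl)
    then show ?thesis unfolding ln_mult by simp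
  qed
  show ?thesis
    unfolding E N_free_energy_def G_def[symmetric] S_def[symmetric] L by simp
qed

end
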